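(* Let $C_{\mathrm{hyp}}\ge1$ and let $t=v-h(r)$ on the domain of outer communication $\{r>r_+\}$ of a subextreme Kerr spacetime, where $h(r)=2(r-r_+)+4M\log\left(\frac{r}{r_+}\right)+\frac{3M^2(r_+-r)^2}{r_+r^2}+2M\arctan\left(\frac{(C_{\mathrm{hyp}}-1)M}{r}\right)-2M\arctan\left(\frac{(C_{\mathrm{hyp}}-1)M}{r_+}\right)$. Then $t$ is a regular, future hyperboloidal time function. Further, $h(r_+)=0$, $h'(r)\ge0$ for $r\ge r_+$, $\lim_{r\to\infty}h(r)/r=2$, and $\lim_{r\to\infty}\frac{r^2}{M^2}V^a\nabla_at=C_{\mathrm{hyp}}$.
   Context: Kerr spacetime with $M>0$, $|a|<M$, in ingoing Eddington–Finkelstein coordinates $(v,r,\theta,\phi)$ with metric $g_{ab}=-2(dr)_{(a}(dv)_{b)}+2a\sin^2\theta(d\phi)_{(a}(dr)_{b)}+\frac{4Mar\sin^2\theta}{\Sigma}(d\phi)_{(a}(dv)_{b)}+\frac{\Delta-a^2\sin^2\theta}{\Sigma}(dv)_a(dv)_b+\frac{a^2\sin^2\theta\Delta-(a^2+r^2)^2}{\Sigma}\sin^2\theta(d\phi)_a(d\phi)_b-\Sigma(d\theta)_a(d\theta)_b$, $\Sigma=r^2+a^2\cos^2\theta$, $\Delta=r^2-2Mr+a^2$, $r_+=M+\sqrt{M^2-a^2}$. Vector fields $V^a=\partial_v+\frac{\Delta}{2(a^2+r^2)}\partial_r+\frac{a}{a^2+r^2}\partial_\phi$, $Y^a=-\partial_r$.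 A function $t=v-k(r)$ is a regular, future hyperboloidal time function if: (a) $k$ is smooth in an open neighbourhood of $[r_+,\infty)$; (b) $K(R)=k'(1/R)$ is smooth in an open neighbourhood of $[0,1/r_+]$; (c) the level sets of $t$ are strictly spacelike in $\{r>r_+\}$; (d) $\lim_{r\to\infty}\frac{r^2}{M^2}V^a\nabla_at$ exists and is positive; (e) $\lim_{r\to\infty}Y^a\nabla_at=2$. *)

theory Defs
  imports "HOL-Analysis.Analysis"
begin

text \<open>Kerr data in ingoing Eddington--Finkelstein coordinates (v,r,theta,phi).\<close>

definition kerr_Sigma :: "real \<Rightarrow> real \<Rightarrow> real \<Rightarrow> real" where
  "kerr_Sigma a r th = r^2 + a^2 * (cos th)^2"

definition kerr_Delta :: "real \<Rightarrow> real \<Rightarrow> real \<Rightarrow> real" where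
  "kerr_Delta M a r = r^2 - 2*M*r + a^2"

definition kerr_rplus :: "real \<Rightarrow> real \<Rightarrow> real" where
  "kerr_rplus M a = M + sqrt (M^2 - a^2)"

text \<open>The metric g_ab X^a X^b at a point with coordinates r, theta, applied to the
  vector X = (Xv, Xr, Xth, Xph) (components w.r.t. the coordinate basis).\<close>
definition kerr_g :: "real \<Rightarrow> real \<Rightarrow> real \<Rightarrow> real \<Rightarrow> real \<Rightarrow> real \<Rightarrow> real \<Rightarrow> real \<Rightarrow> real" where
  "kerr_g M a r th Xv Xr Xth Xph =
     (let S = kerr_Sigma a r th; D = kerr_Delta M a r; s2 = (sin th)^2 in
       - 2 * Xr * Xv
       + 2 * a * s2 * Xph * Xr
       + (4 * M * a * r * s2 / S) * Xph * Xv
       + ((D - a^2 * s2) / S) * Xv^2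
       + ((a^2 * s2 * D - (a^2 + r^2)^2) / S) * s2 * Xph^2
       - S * Xth^2)"

definition smooth_on :: "(real \<Rightarrow> real) \<Rightarrow> real set \<Rightarrow> bool" where
  "smooth_on f U \<longleftrightarrow> (\<forall>n. \<forall>x\<in>U. (deriv ^^ n) f differentiable (at x))"

text \<open>For t = v - k(r): the differential is dt = dv - k'(r) dr, so
  X^a nabla_a t = Xv - k'(r) Xr.\<close>
definition dt_apply :: "(real \<Rightarrow> real) \<Rightarrow> real \<Rightarrow> real \<Rightarrow> real \<Rightarrow> real" where
  "dt_apply k r Xv Xr = Xv - deriv k r * Xr"

text \<open>V^a nabla_a t with V = d_v + Delta/(2(a^2+r^2)) d_r + a/(a^2+r^2) d_phi.\<close>
definition V_dt :: "real \<Rightarrow> real \<Rightarrow> (real \<Rightarrow> real) \<Rightarrow> real \<Rightarrow> real" where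
  "V_dt M a k r = dt_apply k r 1 (kerr_Delta M a r / (2 * (a^2 + r^2)))"

text \<open>Y^a nabla_a t with Y = - d_r.\<close>
definition Y_dt :: "(real \<Rightarrow> real) \<Rightarrow> real \<Rightarrow> real" where
  "Y_dt k r = dt_apply k r 0 (-1)"

definition regular_future_hyperboloidal :: "real \<Rightarrow> real \<Rightarrow> (real \<Rightarrow> real) \<Rightarrow> bool" where
  "regular_future_hyperboloidal M a k \<longleftrightarrow>
     (let rp = kerr_rplus M a in
       \<comment> \<open>(a)\<close>
       (\<exists>U. open U \<and> {rp..} \<subseteq> U \<and> smooth_on k U) \<and>
       \<comment> \<open>(b)\<close>
       (\<exists>U K. open U \<and> {0..1/rp} \<subseteq> U \<and> smooth_on K U \<and>
              (\<forall>R\<in>U. R > 0 \<longrightarrow> K R = deriv k (1/R))) \<and>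
       \<comment> \<open>(c): every nonzero vector tangent to a level set of t is spacelike,
             at every point with r > r_+ (and theta in (0,pi))\<close>
       (\<forall>r th Xv Xr Xth Xph. r > rp \<and> 0 < th \<and> th < pi \<and>
              (Xv, Xr, Xth, Xph) \<noteq> (0, 0, 0, 0) \<and> dt_apply k r Xv Xr = 0
              \<longrightarrow> kerr_g M a r th Xv Xr Xth Xph < 0) \<and>
       \<comment> \<open>(d)\<close>
       (\<exists>L>0. ((\<lambda>r. r^2 / M^2 * V_dt M a k r) \<longlongrightarrow> L) at_top) \<and>
       \<comment> \<open>(e)\<close>
       ((\<lambda>r. Y_dt k r) \<longlongrightarrow> 2) at_top)"

end

theory Submission
  imports Defs "HOL-Computational_Algebra.Polynomial" "HOL-Real_Asymp.Real_Asymp"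
begin


lemma higher_deriv_agree:
  fixes f g :: "real \<Rightarrow> real"
  assumes "open U" "\<And>x. x \<in> U \<Longrightarrow> f x = g x"
  shows "x \<in> U \<Longrightarrow> (deriv ^^ n) f x = (deriv ^^ n) g x"
proof (induction n arbitrary: x)
  case 0 then show ?case using assms by simp
next
  case (Suc n)
  have ev: "eventually (\<lambda>y. y \<in> U) (nhds x)"
    using assms(1) Suc.prems by (rule eventually_nhds_in_open)
  have "eventually (\<lambda>y. (deriv ^^ n) f y = (deriv ^^ n) g y) (nhds x)"
    using ev by eventually_elim (use Suc.IH in auto)
  then show ?case by (simp add: deriv_cong_ev)
qed

lemma differentiable_agree:
  fixes f g :: "real \<Rightarrow> real"
  assumes "f differentiable (at x)" "open U" "x \<in> U" "\<And>x. x \<in> U \<Longrightarrow> f x = g x"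
  shows "g differentiable (at x)"
  using assms has_derivative_transform_within_open unfolding differentiable_def by blast

lemma rat_deriv:
  fixes P D :: "real poly" and m :: nat
  assumes "poly D x \<noteq> 0"
  shows "((\<lambda>x. poly P x / poly D x ^ m) has_real_derivative
          poly (pderiv P * D - smult (of_nat m) (P * pderiv D)) x / poly D x ^ (Suc m)) (at x)"
proof -
  have d: "((\<lambda>x. poly P x / poly D x ^ m) has_real_derivative
     (poly (pderiv P) x * poly D x ^ m - poly P x * (of_nat m * (poly (pderiv D) x * poly D x ^ (m - Suc 0))))
       / (poly D x ^ m * poly D x ^ m)) (at x)"
    using assms by (intro DERIV_divide DERIV_power poly_DERIV) auto
  have "(poly (pderiv P) x * poly D x ^ m - poly P x * (of_nat m * (poly (pderiv D) x * poly D x ^ (m - Suc 0))))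
       / (poly D x ^ m * poly D x ^ m) = poly (pderiv P * D - smult (of_nat m) (P * pderiv D)) x / poly D x ^ (Suc m)"
  proof (cases m)
    case 0 then show ?thesis using assms by (simp add: field_simps)
  next
    case (Suc k) then show ?thesis using assms by (simp add: field_simps)
  qed
  then show ?thesis using d by simp
qed

lemma rat_higher:
  fixes D :: "real poly"
  assumes "open U" "\<And>x. x \<in> U \<Longrightarrow> poly D x \<noteq> 0"
  shows "\<exists>Q k. \<forall>x\<in>U. (deriv ^^ n) (\<lambda>x. poly P x / poly D x ^ m) x = poly Q x / poly D x ^ k"
proof (induction n arbitrary: P m)
  case 0 then show ?case by auto
next
  case (Suc n)
  define P2 where "P2 = pderiv P * D - smult (of_nat m) (P * pderiv D)"
  have a: "\<And>x. x \<in> U \<Longrightarrow> deriv (\<lambda>x. poly P x / poly D x ^ m) x = poly P2 x / poly D x ^ Suc m"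
    unfolding P2_def using assms(2) by (intro DERIV_imp_deriv rat_deriv) auto
  obtain Q k where Q: "\<forall>x\<in>U. (deriv ^^ n) (\<lambda>x. poly P2 x / poly D x ^ Suc m) x = poly Q x / poly D x ^ k"
    using Suc.IH by blast
  have "\<forall>x\<in>U. (deriv ^^ Suc n) (\<lambda>x. poly P x / poly D x ^ m) x = poly Q x / poly D x ^ k"
  proof
    fix x assume x: "x \<in> U"
    have "(deriv ^^ Suc n) (\<lambda>x. poly P x / poly D x ^ m) x
        = (deriv ^^ n) (deriv (\<lambda>x. poly P x / poly D x ^ m)) x"
      by (simp add: funpow_Suc_right del: funpow.simps)
    also have "\<dots> = (deriv ^^ n) (\<lambda>x. poly P2 x / poly D x ^ Suc m) x"
      using higher_deriv_agree[OF assms(1) a x] by simp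
    finally show "(deriv ^^ Suc n) (\<lambda>x. poly P x / poly D x ^ m) x = poly Q x / poly D x ^ k"
      using Q x by simp
  qed
  then show ?case by blast
qed

lemma smooth_rat:
  fixes D :: "real poly"
  assumes "open U" "\<And>x. x \<in> U \<Longrightarrow> poly D x \<noteq> 0"
  shows "\<forall>n. \<forall>x\<in>U. (deriv ^^ n) (\<lambda>x. poly P x / poly D x ^ m) differentiable (at x)"
proof (intro allI ballI)
  fix n x assume x: "x \<in> U"
  obtain Q k where Q: "\<forall>x\<in>U. (deriv ^^ n) (\<lambda>x. poly P x / poly D x ^ m) x = poly Q x / poly D x ^ k"
    using rat_higher[OF assms] by blast
  have "(\<lambda>x. poly Q x / poly D x ^ k) differentiable (at x)"
    using rat_deriv[of D x Q k] assms(2)[OF x] real_differentiable_def by blast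
  then show "(deriv ^^ n) (\<lambda>x. poly P x / poly D x ^ m) differentiable (at x)"
    using differentiable_agree[OF _ assms(1) x, of "\<lambda>x. poly Q x / poly D x ^ k"] Q by auto
qed

lemma smooth_antideriv:
  fixes f g :: "real \<Rightarrow> real"
  assumes "open U" "\<forall>n. \<forall>x\<in>U. (deriv ^^ n) g differentiable (at x)"
    "\<And>x. x \<in> U \<Longrightarrow> (f has_real_derivative g x) (at x)"
  shows "\<forall>n. \<forall>x\<in>U. (deriv ^^ n) f differentiable (at x)"
proof (intro allI ballI)
  fix n x assume x: "x \<in> U"
  show "(deriv ^^ n) f differentiable (at x)"
  proof (cases n)
    case 0 then show ?thesis using assms(3)[OF x] real_differentiable_def by auto
  next
    case (Suc k)
    have a: "\<And>y. y \<in> U \<Longrightarrow> g y = deriv f y" using assms(3) DERIV_imp_deriv by metis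
    have "\<And>y. y \<in> U \<Longrightarrow> (deriv ^^ k) g y = (deriv ^^ k) (deriv f) y"
      using higher_deriv_agree[of U g "deriv f"] assms(1) a by blast
    then have "(deriv ^^ k) (deriv f) differentiable (at x)"
      using differentiable_agree[OF _ assms(1) x] assms(2) x by blast
    then show ?thesis using Suc by (simp add: funpow_Suc_right del: funpow.simps)
  qed
qed

lemma F_neg_4:
  fixes y z x M rp r a2 :: real
  assumes y: "y > 0" and z: "z \<ge> 0" and x: "x > 0"
    and h: "r = rp + x" "rp = M + y" "M = y + z" "a2 = M^2 - y^2"
  shows "(r^2 - 2*M*r + a2) * (2*r^3 + 4*M*r^2 + 6*M^2*(r-rp))^2 - 2*(r^2 + a2) * (2*r^3 + 4*M*r^2 + 6*M^2*(r-rp)) * r^3 + a2 * r^6 < 0"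
proof -
  have e: "(r^2 - 2*M*r + a2) * (2*r^3 + 4*M*r^2 + 6*M^2*(r-rp))^2 - 2*(r^2 + a2) * (2*r^3 + 4*M*r^2 + 6*M^2*(r-rp)) * r^3 + a2 * r^6 = - ((4 * y^2 * x^6) + (104 * y^3 * x^5) + (860 * y^4 * x^4) + (3384 * y^5 * x^3) + (6592 * y^6 * x^2) + (6016 * y^7 * x^1) + (2048 * y^8) + (3 * z^2 * x^6) + (54 * z^3 * x^5) + (257 * z^4 * x^4) + (560 * z^5 * x^3) + (465 * z^6 * x^2) + (170 * z^7 * x^1) + (23 * z^8) + (6 * y^1 * z^1 * x^6) + (192 * y^1 * z^2 * x^5) + (1358 * y^1 * z^3 * x^4) + (3936 * y^1 * z^4 * x^3) + (4386 * y^1 * z^5 * x^2) + (2024 * y^1 * z^6 * x^1) + (330 * y^1 * z^7) + (236 * y^2 * z^1 * x^5) + (2720 * y^2 * z^2 * x^4) + (11172 * y^2 * z^3 * x^3) + (17144 * y^2 * z^4 * x^2) + (10256 * y^2 * z^5 * x^1) + (2060 * y^2 * z^6) + (2464 * y^3 * z^1 * x^4) + (16000 * y^3 * z^2 * x^3) + (35576 * y^3 * z^3 * x^2) + (28664 * y^3 * z^4 * x^1) + (7304 * y^3 * z^5) + (11568 * y^4 * z^1 * x^3) + (41376 * y^4 * z^2 * x^2) + (47712 * y^4 * z^3 * x^1) + (16080 * y^4 * z^4) + (25600 * y^5 * z^1 * x^2) + (47296 * y^5 * z^2 * x^1) + (22496 * y^5 * z^3) + (25856 * y^6 * z^1 *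 x^1) + (19520 * y^6 * z^2) + (9600 * y^7 * z^1))"
    unfolding h by algebra
  have "0 < (4 * y^2 * x^6) + (104 * y^3 * x^5) + (860 * y^4 * x^4) + (3384 * y^5 * x^3) + (6592 * y^6 * x^2) + (6016 * y^7 * x^1) + (2048 * y^8) + (3 * z^2 * x^6) + (54 * z^3 * x^5) + (257 * z^4 * x^4) + (560 * z^5 * x^3) + (465 * z^6 * x^2) + (170 * z^7 * x^1) + (23 * z^8) + (6 * y^1 * z^1 * x^6) + (192 * y^1 * z^2 * x^5) + (1358 * y^1 * z^3 * x^4) + (3936 * y^1 * z^4 * x^3) + (4386 * y^1 * z^5 * x^2) + (2024 * y^1 * z^6 * x^1) + (330 * y^1 * z^7) + (236 * y^2 * z^1 * x^5) + (2720 * y^2 * z^2 * x^4) + (11172 * y^2 * z^3 * x^3) + (17144 * y^2 * z^4 * x^2) + (10256 * y^2 * z^5 * x^1) + (2060 * y^2 * z^6) + (2464 * y^3 * z^1 * x^4) + (16000 * y^3 * z^2 * x^3) + (35576 * y^3 * z^3 * x^2) + (28664 * y^3 * z^4 * x^1) + (7304 * y^3 * z^5) + (11568 * y^4 * z^1 * x^3) + (41376 * y^4 * z^2 * x^2) + (47712 * y^4 * z^3 * x^1) + (16080 * y^4 * z^4) + (25600 * y^5 * z^1 * x^2) + (47296 * y^5 * z^2 * x^1) + (22496 * y^5 * z^3) + (25856 * y^6 * z^1 * x^1) + (19520 * y^6 * z^2) + (9600 * y^7 * z^1)"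
    using y z x by (intro add_pos_nonneg mult_pos_pos mult_nonneg_nonneg add_nonneg_nonneg zero_le_power zero_less_power) auto
  then show ?thesis unfolding e by linarith
qed

lemma F_neg_3:
  fixes y z x M rp r a2 :: real
  assumes y: "y > 0" and z: "z \<ge> 0" and x: "x > 0"
    and h: "r = rp + x" "rp = M + y" "M = y + z" "a2 = M^2 - y^2"
  shows "(r^2 - 2*M*r + a2) * (2*r^3 + 3*M*r^2 + 6*M^2*(r-rp))^2 - 2*(r^2 + a2) * (2*r^3 + 3*M*r^2 + 6*M^2*(r-rp)) * r^3 + a2 * r^6 < 0"
proof -
  have e: "(r^2 - 2*M*r + a2) * (2*r^3 + 3*M*r^2 + 6*M^2*(r-rp))^2 - 2*(r^2 + a2) * (2*r^3 + 3*M*r^2 + 6*M^2*(r-rp)) * r^3 + a2 * r^6 = - ((2 * y^1 * x^7) + (31 * y^2 * x^6) + (258 * y^3 * x^5) + (1292 * y^4 * x^4) + (3928 * y^5 * x^3) + (6672 * y^6 * x^2) + (5600 * y^7 * x^1) + (1792 * y^8) + (2 * z^1 * x^7) + (16 * z^2 * x^6) + (90 * z^3 * x^5) + (283 * z^4 * x^4) + (530 * z^5 * x^3) + (414 * z^6 * x^2) + (146 * z^7 * x^1) + (19 * z^8) + (46 * y^1 * z^1 * x^6) + (378 * y^1 * z^2 * x^5) + (1630 * y^1 * z^3 * x^4) + (3866 * y^1 * z^4 * x^3) + (3978 * y^1 * z^5 * x^2) + (1754 * y^1 * z^6 * x^1) + (274 * y^1 * z^7) + (540 * y^2 * z^1 *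 x^5) + (3558 * y^2 * z^2 * x^4) + (11444 * y^2 * z^3 * x^3) + (15867 * y^2 * z^4 * x^2) + (8976 * y^2 * z^5 * x^1) + (1720 * y^2 * z^6) + (3488 * y^3 * z^1 * x^4) + (17128 * y^3 * z^2 * x^3) + (33648 * y^3 * z^3 * x^2) + (25358 * y^3 * z^4 * x^1) + (6136 * y^3 * z^5) + (12928 * y^4 * z^1 * x^3) + (40032 * y^4 * z^2 * x^2) + (42704 * y^4 * z^3 * x^1) + (13600 * y^4 * z^4) + (25344 * y^5 * z^1 * x^2) + (42864 * y^5 * z^2 * x^1) + (19168 * y^5 * z^3) + (23744 * y^6 * z^1 * x^1) + (16768 * y^6 * z^2) + (8320 * y^7 * z^1))"
    unfolding h by algebra
  have "0 < (2 * y^1 * x^7) + (31 * y^2 * x^6) + (258 * y^3 * x^5) + (1292 * y^4 * x^4) + (3928 * y^5 * x^3) + (6672 * y^6 * x^2) + (5600 * y^7 * x^1) + (1792 * y^8) + (2 * z^1 * x^7) + (16 * z^2 * x^6) + (90 * z^3 * x^5) + (283 * z^4 * x^4) + (530 * z^5 * x^3) + (414 * z^6 * x^2) + (146 * z^7 * x^1) + (19 * z^8) + (46 * y^1 * z^1 * x^6) + (378 * y^1 * z^2 * x^5) + (1630 * y^1 * z^3 * x^4) + (3866 * y^1 * z^4 * x^3) + (3978 * y^1 * z^5 * x^2) + (1754 * y^1 * z^6 * x^1) + (274 * y^1 * z^7) + (540 * y^2 * z^1 * x^5) + (3558 * y^2 * z^2 * x^4) + (11444 * y^2 * z^3 * x^3)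 + (15867 * y^2 * z^4 * x^2) + (8976 * y^2 * z^5 * x^1) + (1720 * y^2 * z^6) + (3488 * y^3 * z^1 * x^4) + (17128 * y^3 * z^2 * x^3) + (33648 * y^3 * z^3 * x^2) + (25358 * y^3 * z^4 * x^1) + (6136 * y^3 * z^5) + (12928 * y^4 * z^1 * x^3) + (40032 * y^4 * z^2 * x^2) + (42704 * y^4 * z^3 * x^1) + (13600 * y^4 * z^4) + (25344 * y^5 * z^1 * x^2) + (42864 * y^5 * z^2 * x^1) + (19168 * y^5 * z^3) + (23744 * y^6 * z^1 * x^1) + (16768 * y^6 * z^2) + (8320 * y^7 * z^1)"
    using y z x by (intro add_pos_nonneg mult_pos_pos mult_nonneg_nonneg add_nonneg_nonneg zero_le_power zero_less_power) auto
  then show ?thesis unfolding e by linarith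
qed


lemma F_hp_neg:
  fixes M y rp a2 r c :: real
  assumes M: "M > 0" and y: "y > 0" "y \<le> M" and rp: "rp = M + y" and a2: "a2 = M^2 - y^2"
    and r: "r > rp" and c: "c \<ge> 0"
  shows "(r^2 - 2*M*r + a2) * (2 + 4*M/r + 6*M^2*(r-rp)/r^3 - 2*M*c/(r^2+c^2))^2
         - 2*(r^2+a2) * (2 + 4*M/r + 6*M^2*(r-rp)/r^3 - 2*M*c/(r^2+c^2)) + a2 < 0"
proof -
  define D where "D = r^2 - 2*M*r + a2"
  define \<rho> where "\<rho> = r^2 + a2"
  define F where "F = (\<lambda>p. D*p^2 - 2*\<rho>*p + a2)"
  define p0 where "p0 = (2*r^3 + 4*M*r^2 + 6*M^2*(r-rp)) / r^3"
  define p1 where "p1 = (2*r^3 + 3*M*r^2 + 6*M^2*(r-rp)) / r^3"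
  define e where "e = 2*M*c/(r^2+c^2)"
  define p where "p = 2 + 4*M/r + 6*M^2*(r-rp)/r^3 - 2*M*c/(r^2+c^2)"
  have rpos: "r > 0" using r rp M y by linarith
  have "2 + 4*M/r + 6*M^2*(r-rp)/r^3 = p0" unfolding p0_def using rpos by (simp add: field_simps power2_eq_square power3_eq_cube)
  then have pe: "p = p0 - e" unfolding p_def e_def by simp
  have p1e: "p1 = p0 - M/r" unfolding p1_def p0_def using rpos by (simp add: field_simps power2_eq_square power3_eq_cube)
  have rc: "r^2 + c^2 > 0" using rpos by (simp add: add_pos_nonneg)
  have e0: "e \<ge> 0" unfolding e_def using M c rc by simp
  have "0 \<le> (r - c)^2" by simp
  then have "2*c*r \<le> r^2 + c^2" by (simp add: power2_eq_square algebra_simps)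
  then have "M * (2*c*r) \<le> M * (r^2 + c^2)" using M by (simp add: mult_left_mono)
  then have e1: "e \<le> M/r" unfolding e_def using M rc rpos
    by (simp add: divide_simps algebra_simps)
  have D: "D > 0"
  proof -
    have "D = (r - rp) * (r - (M - y))" unfolding D_def a2 rp by algebra
    moreover have "r - (M - y) > 0" using r rp y by linarith
    ultimately show ?thesis using r by simp
  qed
  have r6: "r^6 > 0" using rpos by simp
  have F0: "F p0 < 0"
  proof -
    have "r^6 * F p0 = D * (p0*r^3)^2 - 2*\<rho>*(p0*r^3)*r^3 + a2*r^6"
      unfolding F_def by algebra
    also have "p0*r^3 = 2*r^3 + 4*M*r^2 + 6*M^2*(r-rp)" unfolding p0_def using rpos by simp
    finally have "r^6 * F p0 = D * (2*r^3 + 4*M*r^2 + 6*M^2*(r-rp))^2 - 2*\<rho>*(2*r^3 + 4*M*r^2 + 6*M^2*(r-rp))*r^3 + a2*r^6" .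
    also have "\<dots> < 0" unfolding D_def \<rho>_def
      by (rule F_neg_4[of y "M - y" "r - rp"]) (use y r rp a2 in auto)
    finally show ?thesis using r6 by (simp add: mult_less_0_iff)
  qed
  have F1: "F p1 < 0"
  proof -
    have "r^6 * F p1 = D * (p1*r^3)^2 - 2*\<rho>*(p1*r^3)*r^3 + a2*r^6"
      unfolding F_def by algebra
    also have "p1*r^3 = 2*r^3 + 3*M*r^2 + 6*M^2*(r-rp)" unfolding p1_def using rpos by simp
    finally have "r^6 * F p1 = D * (2*r^3 + 3*M*r^2 + 6*M^2*(r-rp))^2 - 2*\<rho>*(2*r^3 + 3*M*r^2 + 6*M^2*(r-rp))*r^3 + a2*r^6" .
    also have "\<dots> < 0" unfolding D_def \<rho>_def
      by (rule F_neg_3[of y "M - y" "r - rp"]) (use y r rp a2 in auto)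
    finally show ?thesis using r6 by (simp add: mult_less_0_iff)
  qed
  have interp: "(p0 - p1) * F p = (p0 - p) * F p1 + (p - p1) * F p0 + (p0 - p1) * D * ((p - p1) * (p - p0))"
    unfolding F_def by algebra
  have d01: "p0 - p1 > 0" using p1e M rpos by simp
  have a1: "p0 - p \<ge> 0" "p - p1 \<ge> 0" using pe p1e e0 e1 by auto
  have "(p - p1) * (p - p0) \<le> 0" using a1 by (simp add: mult_nonneg_nonpos)
  then have t3: "(p0 - p1) * D * ((p - p1) * (p - p0)) \<le> 0" using d01 D
    by (simp add: mult_nonneg_nonpos)
  have t1: "(p0 - p) * F p1 \<le> 0" using a1 F1 by (simp add: mult_nonneg_nonpos)
  have t2: "(p - p1) * F p0 \<le> 0" using a1 F0 by (simp add: mult_nonneg_nonpos)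
  have "(p0 - p) * F p1 + (p - p1) * F p0 < 0"
  proof (cases "p0 - p > 0")
    case True then have "(p0 - p) * F p1 < 0" using F1 by (simp add: mult_pos_neg)
    then show ?thesis using t2 by linarith
  next
    case False then have "p - p1 > 0" using d01 by linarith
    then have "(p - p1) * F p0 < 0" using F0 by (simp add: mult_pos_neg)
    then show ?thesis using t1 by linarith
  qed
  then have "(p0 - p1) * F p < 0" using interp t3 by linarith
  then have "F p < 0" using d01 by (simp add: mult_less_0_iff)
  then show ?thesis unfolding F_def D_def \<rho>_def p_def by simp
qed

lemma qalg:
  fixes M a r s p Xr Xph S :: real
  assumes S: "S = r^2 + a^2*(1-s)" "S \<noteq> 0"
  shows "s*(a^2* s*(r^2 - 2*M*r + a^2) - (r^2+a^2)^2) * (S * (- 2 * Xr * (p*Xr) + 2 * a * s * Xph * Xr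
       + (4 * M * a * r * s / S) * Xph * (p*Xr)
       + (((r^2 - 2*M*r + a^2) - a^2 * s) / S) * (p*Xr)^2
       + ((a^2 * s * (r^2 - 2*M*r + a^2) - (a^2 + r^2)^2) / S) * s * Xph^2))
   = (s*(a^2* s*(r^2 - 2*M*r + a^2) - (r^2+a^2)^2)*Xph + a* s*(S + 2*M*r*p)*Xr)^2
     - S^2* s*((r^2 - 2*M*r + a^2)*p^2 - 2*(r^2+a^2)*p + a^2* s)*Xr^2"
proof -
  have e: "S * (- 2 * Xr * (p*Xr) + 2 * a * s * Xph * Xr
       + (4 * M * a * r * s / S) * Xph * (p*Xr)
       + (((r^2 - 2*M*r + a^2) - a^2 * s) / S) * (p*Xr)^2
       + ((a^2 * s * (r^2 - 2*M*r + a^2) - (a^2 + r^2)^2) / S) * s * Xph^2)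
     = - 2 * Xr * (p*Xr) * S + 2 * a * s * Xph * Xr * S
       + (4 * M * a * r * s) * Xph * (p*Xr)
       + (((r^2 - 2*M*r + a^2) - a^2 * s)) * (p*Xr)^2
       + ((a^2 * s * (r^2 - 2*M*r + a^2) - (a^2 + r^2)^2)) * s * Xph^2"
    using S(2) by (simp add: field_simps)
  show ?thesis unfolding e unfolding S(1) by algebra
qed


lemma t1:
  fixes x M c rp :: real and hp :: "real \<Rightarrow> real"
  assumes x: "x > 0" and hp_def: "hp = (\<lambda>r. 2 + 4*M/r + 6*M^2*(r-rp)/r^3 - 2*M*c/(r^2+c^2))"
  shows "hp x = poly [: -6*M^2*rp*c^2, 6*M^2*c^2, -6*M^2*rp + 4*M*c^2, 6*M^2 + 2*c^2 - 2*M*c, 4*M, 2 :] x / poly [: 0, 0, 0, c^2, 0, (1::real) :] x ^ 1"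
proof -
  have gg: "\<And>A B X Y::real. (A - B) * (X*Y) = (A*X)*Y - (B*Y)*X" by algebra
  have pos: "x^2 + c^2 > 0" using x by (simp add: add_pos_nonneg)
  have a1: "(2 + 4*M/x + 6*M^2*(x-rp)/x^3) * x^3 = 2*x^3 + 4*M*x^2 + 6*M^2*(x-rp)"
    using x by (simp add: field_simps power2_eq_square power3_eq_cube)
  have a2: "2*M*c/(x^2+c^2) * (x^2+c^2) = 2*M*c" using pos by simp
  have "hp x * (x^3*(x^2+c^2)) = ((2 + 4*M/x + 6*M^2*(x-rp)/x^3) * x^3)*(x^2+c^2) - (2*M*c/(x^2+c^2) * (x^2+c^2))*x^3"
    unfolding hp_def by (rule gg)
  also have "\<dots> = poly [: -6*M^2*rp*c^2, 6*M^2*c^2, -6*M^2*rp + 4*M*c^2, 6*M^2 + 2*c^2 - 2*M*c, 4*M, 2 :] x"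
    unfolding a1 a2 by (simp add: algebra_simps power2_eq_square power3_eq_cube)
  finally have e: "hp x * (x^3*(x^2+c^2)) = poly [: -6*M^2*rp*c^2, 6*M^2*c^2, -6*M^2*rp + 4*M*c^2, 6*M^2 + 2*c^2 - 2*M*c, 4*M, 2 :] x" .
  have d: "poly [: 0, 0, 0, c^2, 0, (1::real) :] x = x^3*(x^2+c^2)"
    by (simp add: algebra_simps power2_eq_square power3_eq_cube)
  have "x^3*(x^2+c^2) > 0" using x pos by simp
  then show ?thesis unfolding d using e x by (simp add: eq_divide_eq)
qed

lemma t2:
  fixes R M c rp :: real and hp :: "real \<Rightarrow> real"
  assumes R: "R > 0" and hp_def: "hp = (\<lambda>r. 2 + 4*M/r + 6*M^2*(r-rp)/r^3 - 2*M*c/(r^2+c^2))"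
  shows "hp (1/R) = poly [: 2, 4*M, 6*M^2 + 2*c^2 - 2*M*c, -6*M^2*rp + 4*M*c^2, 6*M^2*c^2, -6*M^2*rp*c^2 :] R / poly [: 1, 0, c^2 :] R ^ 1"
proof -
  have pos: "1 + c^2*R^2 > 0" by (simp add: add_pos_nonneg)
  have b1: "2 + 4*M/(1/R) + 6*M^2*(1/R-rp)/(1/R)^3 = 2 + 4*M*R + 6*M^2*R^2 - 6*M^2*rp*R^3"
    using R by (simp add: field_simps power2_eq_square power3_eq_cube)
  have b2: "2*M*c/((1/R)^2+c^2) * (1 + c^2*R^2) = 2*M*c*R^2"
  proof -
    have "(1/R)^2+c^2 = (1 + c^2*R^2)/R^2" using R by (simp add: field_simps)
    then show ?thesis using R pos by simp
  qed
  have "hp (1/R) * (1 + c^2*R^2) = (2 + 4*M/(1/R) + 6*M^2*(1/R-rp)/(1/R)^3) * (1 + c^2*R^2) - 2*M*c/((1/R)^2+c^2) * (1 + c^2*R^2)"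
    unfolding hp_def by (simp only: left_diff_distrib)
  also have "\<dots> = poly [: 2, 4*M, 6*M^2 + 2*c^2 - 2*M*c, -6*M^2*rp + 4*M*c^2, 6*M^2*c^2, -6*M^2*rp*c^2 :] R"
    unfolding b1 b2 by (simp add: algebra_simps power2_eq_square power3_eq_cube)
  finally have e: "hp (1/R) * (1 + c^2*R^2) = poly [: 2, 4*M, 6*M^2 + 2*c^2 - 2*M*c, -6*M^2*rp + 4*M*c^2, 6*M^2*c^2, -6*M^2*rp*c^2 :] R" .
  have d: "poly [: 1, 0, c^2 :] R = 1 + c^2*R^2" by (simp add: algebra_simps power2_eq_square)
  show ?thesis unfolding d using e pos by (simp add: eq_divide_eq)
qed

lemma hderiv:
  fixes M rp c r :: real
  assumes "r > 0" "rp > 0"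
  shows "((\<lambda>r. 2 * (r - rp) + 4 * M * ln (r / rp) + 3 * M^2 * (rp - r)^2 / (rp * r^2)
               + 2 * M * arctan (c / r) - 2 * M * arctan (c / rp)) has_real_derivative
     (2 + 4*M/r + 6*M^2*(r-rp)/r^3 - 2*M*c/(r^2+c^2))) (at r)"
proof -
  have p: "r^2+c^2 > 0" using assms by (simp add: add_pos_nonneg)
  have q: "1 + (c/r)^2 > 0" by (simp add: add_pos_nonneg)
  have e1: "(-c/r^2)/(1+(c/r)^2) = -c/(r^2+c^2)"
    using assms p by (simp add: field_simps power2_eq_square)
  have e2: "(2*(rp-r)*(-1)*(rp*r^2) - (rp-r)^2*(rp*(2*r)))/(rp*r^2)^2 = 2*(r-rp)/r^3"
    using assms by (simp add: field_simps power2_eq_square power3_eq_cube)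
  have d1: "((\<lambda>r. (rp - r)^2 / (rp * r^2)) has_real_derivative (2*(rp-r)*(-1)*(rp*r^2) - (rp-r)^2*(rp*(2*r)))/(rp*r^2)^2) (at r)"
    using assms by (auto intro!: derivative_eq_intros simp: power2_eq_square)
  have d2: "((\<lambda>r. arctan (c / r)) has_real_derivative (-c/r^2)/(1+(c/r)^2)) (at r)"
    using assms q by (auto intro!: derivative_eq_intros simp: power2_eq_square field_simps)
  have d3: "((\<lambda>r. ln (r / rp)) has_real_derivative 1/r) (at r)"
    using assms by (auto intro!: derivative_eq_intros simp: field_simps)
  have "((\<lambda>r. 2 * (r - rp) + 4 * M * ln (r / rp) + 3 * M^2 * ((rp - r)^2 / (rp * r^2))
               + 2 * M * arctan (c / r) - 2 * M * arctan (c / rp)) has_real_derivative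
     (2 * (1 - 0) + 4*M*(1/r) + 3*M^2*(2*(r-rp)/r^3) + 2*M*(-c/(r^2+c^2)) - 0)) (at r)"
    unfolding e1[symmetric] e2[symmetric]
    by (intro DERIV_add DERIV_diff DERIV_cmult d1 d2 d3 DERIV_const DERIV_ident)
  then show ?thesis by (simp add: algebra_simps)
qed

lemma hp_pos:
  fixes M rp c r :: real
  assumes "M > 0" "rp > 0" "r \<ge> rp" "c \<ge> 0"
  shows "2 + 4*M/r + 6*M^2*(r-rp)/r^3 - 2*M*c/(r^2+c^2) > 0"
proof -
  have rpos: "r > 0" using assms by linarith
  have rc: "r^2 + c^2 > 0" using rpos by (simp add: add_pos_nonneg)
  have "0 \<le> (r - c)^2" by simp
  then have "2*c*r \<le> r^2 + c^2" by (simp add: power2_eq_square algebra_simps)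
  then have "M * (2*c*r) \<le> M * (r^2 + c^2)" using assms by (simp add: mult_left_mono)
  then have e1: "2*M*c/(r^2+c^2) \<le> M/r" using assms rc rpos
    by (simp add: divide_simps algebra_simps)
  have "6*M^2*(r-rp)/r^3 \<ge> 0" using assms rpos by simp
  moreover have "4*M/r > M/r" using assms rpos by (simp add: divide_strict_right_mono)
  moreover have "M/r > 0" using assms rpos by simp
  ultimately show ?thesis using e1 by linarith
qed

theorem lemma2p21:
  fixes M a C :: real and h :: "real \<Rightarrow> real"
  assumes "M > 0" and "\<bar>a\<bar> < M" and "C \<ge> 1"
    and "h = (\<lambda>r. let rp = kerr_rplus M a in
               2 * (r - rp) + 4 * M * ln (r / rp) + 3 * M^2 * (rp - r)^2 / (rp * r^2)
               + 2 * M * arctan ((C - 1) * M / r) - 2 * M * arctan ((C - 1) * M / rp))"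
  shows "regular_future_hyperboloidal M a h
         \<and> h (kerr_rplus M a) = 0
         \<and> (\<forall>r \<ge> kerr_rplus M a. deriv h r \<ge> 0)
         \<and> ((\<lambda>r. h r / r) \<longlongrightarrow> 2) at_top
         \<and> ((\<lambda>r. r^2 / M^2 * V_dt M a h r) \<longlongrightarrow> C) at_top"
proof -
  define y where "y = sqrt (M^2 - a^2)"
  define rp where "rp = kerr_rplus M a"
  define c where "c = (C - 1) * M"
  define hp where "hp = (\<lambda>r. 2 + 4*M/r + 6*M^2*(r-rp)/r^3 - 2*M*c/(r^2+c^2))"
  have M: "M > 0" using assms(1) .
  have a2M: "a^2 < M^2" using assms(2) M
    by (metis abs_ge_zero abs_less_iff power2_abs power_strict_mono zero_less_numeral)
  have ypos: "y > 0" unfolding y_def using a2M by simp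
  have y2: "y^2 = M^2 - a^2" unfolding y_def using a2M by simp
  have yM: "y \<le> M"
  proof -
    have "y^2 \<le> M^2" using y2 by simp
    then show ?thesis using M ypos by (simp add: power2_le_iff_abs_le)
  qed
  have rpdef: "rp = M + y" unfolding rp_def kerr_rplus_def y_def by simp
  have rppos: "rp > 0" using rpdef M ypos by simp
  have c0: "c \<ge> 0" unfolding c_def using assms(3) M by simp
  have hdef: "h = (\<lambda>r. 2 * (r - rp) + 4 * M * ln (r / rp) + 3 * M^2 * (rp - r)^2 / (rp * r^2)
               + 2 * M * arctan (c / r) - 2 * M * arctan (c / rp))"
    unfolding assms(4) rp_def c_def Let_def by simp
  have hd: "\<And>r. r > 0 \<Longrightarrow> (h has_real_derivative hp r) (at r)"
    unfolding hdef hp_def using hderiv rppos by blast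
  have dh: "\<And>r. r > 0 \<Longrightarrow> deriv h r = hp r" using hd DERIV_imp_deriv by blast
  define Pa where "Pa = [: -6*M^2*rp*c^2, 6*M^2*c^2, -6*M^2*rp + 4*M*c^2, 6*M^2 + 2*c^2 - 2*M*c, 4*M, 2 :]"
  define Da where "Da = [: 0, 0, 0, c^2, 0, (1::real) :]"
  have Da_nz: "\<And>x. x \<in> {0<..} \<Longrightarrow> poly Da x \<noteq> 0"
  proof -
    fix x :: real assume "x \<in> {0<..}"
    then have "x > 0" by simp
    then have "x^3 * (x^2 + c^2) > 0" by (simp add: add_pos_nonneg)
    moreover have "poly Da x = x^3 * (x^2 + c^2)" unfolding Da_def
      by (simp add: algebra_simps power2_eq_square power3_eq_cube)
    ultimately show "poly Da x \<noteq> 0" by (metis order_less_irrefl)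
  qed
  have hp_rat: "\<And>x. x \<in> {0<..} \<Longrightarrow> hp x = poly Pa x / poly Da x ^ 1"
    unfolding Pa_def Da_def using t1[OF _ hp_def] by simp
  have sa: "smooth_on h {0<..}"
    unfolding smooth_on_def
  proof (rule smooth_antideriv[where g = "\<lambda>x. poly Pa x / poly Da x ^ 1"])
    show "open {0::real<..}" by simp
    show "\<forall>n. \<forall>x\<in>{0<..}. (deriv ^^ n) (\<lambda>x. poly Pa x / poly Da x ^ 1) differentiable at x"
      by (rule smooth_rat) (use Da_nz in auto)
    show "\<And>x. x \<in> {0<..} \<Longrightarrow> (h has_real_derivative poly Pa x / poly Da x ^ 1) (at x)"
      using hd hp_rat by fastforce
  qed
  have A: "\<exists>U. open U \<and> {rp..} \<subseteq> U \<and> smooth_on h U"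
    by (rule exI[of _ "{0<..}"]) (use sa rppos in auto)
  define Qb where "Qb = [: 2, 4*M, 6*M^2 + 2*c^2 - 2*M*c, -6*M^2*rp + 4*M*c^2, 6*M^2*c^2, -6*M^2*rp*c^2 :]"
  define Db where "Db = [: 1, 0, c^2 :]"
  define K where "K = (\<lambda>R. poly Qb R / poly Db R ^ 1)"
  have Db_pos: "\<And>x. poly Db x > 0"
  proof -
    fix x :: real
    have "poly Db x = 1 + c^2 * x^2" unfolding Db_def by (simp add: algebra_simps power2_eq_square)
    then show "poly Db x > 0" by (simp add: add_pos_nonneg)
  qed
  have sb: "smooth_on K UNIV" unfolding smooth_on_def K_def
    by (rule smooth_rat) (use Db_pos in \<open>auto simp: less_le\<close>)
  have Kh: "\<forall>R\<in>UNIV. R > 0 \<longrightarrow> K R = deriv h (1/R)"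
  proof (intro ballI impI)
    fix R :: real assume R: "R > 0"
    have "deriv h (1/R) = hp (1/R)" using dh R by simp
    also have "\<dots> = K R" unfolding K_def Qb_def Db_def by (rule t2[OF R hp_def])
    finally show "K R = deriv h (1/R)" by simp
  qed
  have B: "\<exists>U K. open U \<and> {0..1/rp} \<subseteq> U \<and> smooth_on K U \<and> (\<forall>R\<in>U. R > 0 \<longrightarrow> K R = deriv h (1/R))"
    using sb Kh by blast
  have Cc: "\<forall>r th Xv Xr Xth Xph. r > rp \<and> 0 < th \<and> th < pi \<and>
              (Xv, Xr, Xth, Xph) \<noteq> (0, 0, 0, 0) \<and> dt_apply h r Xv Xr = 0
              \<longrightarrow> kerr_g M a r th Xv Xr Xth Xph < 0"
  proof (intro allI impI, elim conjE)
    fix r th Xv Xr Xth Xph :: real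
    assume r: "r > rp" and th: "0 < th" "th < pi" and X: "(Xv, Xr, Xth, Xph) \<noteq> (0, 0, 0, 0)"
      and dt: "dt_apply h r Xv Xr = 0"
    have rpos: "r > 0" using r rppos by linarith
    define p where "p = hp r"
    have Xv: "Xv = p * Xr" using dt dh[OF rpos] unfolding dt_apply_def p_def by simp
    define s where "s = (sin th)^2"
    define S where "S = kerr_Sigma a r th"
    define D where "D = r^2 - 2*M*r + a^2"
    define \<rho> where "\<rho> = r^2 + a^2"
    have s0: "s > 0" unfolding s_def using sin_gt_zero[OF th] by simp
    have s1: "s \<le> 1" unfolding s_def by (simp add: sin_squared_eq) 
    have Ss: "S = r^2 + a^2*(1-s)" unfolding S_def kerr_Sigma_def s_def by (simp add: cos_squared_eq)
    have Spos: "S > 0" unfolding S_def kerr_Sigma_def using rpos by (simp add: add_pos_nonneg)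
    have Dpos: "D > 0"
    proof -
      have "D = (r - rp) * (r - (M - y))" unfolding D_def rpdef using y2 by algebra
      moreover have "r - (M - y) > 0" using r rpdef ypos by linarith
      ultimately show ?thesis using r by simp
    qed
    have Dr: "D < \<rho>" unfolding D_def \<rho>_def using M rpos by simp
    have Ccneg: "s * (a^2* s*D - \<rho>^2) < 0"
    proof -
      have "a^2*D * s \<le> a^2*D" using s1 Dpos by (intro mult_left_le) auto
      then have "a^2* s*D \<le> a^2*D" by (simp add: mult_ac)
      also have "a^2 \<le> \<rho>" unfolding \<rho>_def by simp
      then have "a^2*D \<le> \<rho>*D" using Dpos by (simp add: mult_right_mono)
      also have "\<rho>*D < \<rho>*\<rho>" using Dr Dpos by (simp add: mult_strict_left_mono)
      finally have "a^2* s*D - \<rho>^2 < 0" by (simp add: power2_eq_square)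
      then show ?thesis using s0 by (simp add: mult_pos_neg)
    qed
    have Fneg: "D*p^2 - 2*\<rho>*p + a^2 < 0"
      unfolding D_def \<rho>_def p_def hp_def
      by (rule F_hp_neg[OF M ypos yM rpdef _ r c0]) (use y2 in simp)
    have Gneg: "D*p^2 - 2*\<rho>*p + a^2* s < 0"
    proof -
      have "a^2* s \<le> a^2" using s1 by (intro mult_left_le) auto
      then show ?thesis using Fneg by linarith
    qed
    define Qp where "Qp = - 2 * Xr * (p*Xr) + 2 * a * s * Xph * Xr
       + (4 * M * a * r * s / S) * Xph * (p*Xr)
       + (((r^2 - 2*M*r + a^2) - a^2 * s) / S) * (p*Xr)^2
       + ((a^2 * s * (r^2 - 2*M*r + a^2) - (a^2 + r^2)^2) / S) * s * Xph^2"
    have gQ: "kerr_g M a r th Xv Xr Xth Xph = Qp - S * Xth^2"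
      unfolding kerr_g_def Let_def Qp_def Xv S_def s_def kerr_Delta_def by simp
    define Cp where "Cp = s * (a^2* s*D - \<rho>^2)"
    define W where "W = Cp*Xph + a* s*(S + 2*M*r*p)*Xr"
    have id: "Cp * (S * Qp) = W^2 - S^2* s*(D*p^2 - 2*\<rho>*p + a^2* s)*Xr^2"
      unfolding Cp_def W_def Qp_def D_def \<rho>_def by (rule qalg[OF Ss]) (use Spos in simp)
    have T: "- (S^2* s*(D*p^2 - 2*\<rho>*p + a^2* s)) > 0"
      using Spos s0 Gneg by (simp add: mult_pos_neg)
    have Cpn: "Cp < 0" using Ccneg unfolding Cp_def .
    have Sth: "S * Xth^2 \<ge> 0" using Spos by simp
    show "kerr_g M a r th Xv Xr Xth Xph < 0"
    proof (cases "Xr = 0 \<and> Xph = 0")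
      case True
      then have "Cp * (S * Qp) = 0" using id unfolding W_def by simp
      then have "Qp = 0" using Cpn Spos by simp
      moreover have "Xth \<noteq> 0" using X True Xv by auto
      ultimately show ?thesis using gQ Spos by simp
    next
      case False
      have "Cp * (S * Qp) > 0"
      proof (cases "Xr = 0")
        case True
        then have "Xph \<noteq> 0" using False by simp
        then have "W^2 > 0" unfolding W_def using True Cpn by simp
        then show ?thesis using id True by simp
      next
        case False
        then have "Xr^2 > 0" by simp
        then have "S^2* s*(D*p^2 - 2*\<rho>*p + a^2* s) * Xr^2 < 0" using T by (simp add: mult_neg_pos)
        moreover have "W^2 \<ge> 0" by simp
        ultimately show ?thesis using id by linarith
      qed
      then have "S * Qp < 0" using Cpn by (simp add: zero_less_mult_iff)
      then have "Qp < 0" using Spos by (simp add: mult_less_0_iff)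
      then show ?thesis using gQ Sth by linarith
    qed
  qed
  have ev: "eventually (\<lambda>r. deriv h r = hp r) at_top"
    using eventually_gt_at_top[of 0] by eventually_elim (use dh in auto)
  have LV: "((\<lambda>r. r^2 / M^2 * V_dt M a h r) \<longlongrightarrow> C) at_top"
  proof -
    have e2: "eventually (\<lambda>r. r^2/M^2 * (1 - hp r * (r^2-2*M*r+a^2)/(2*(a^2+r^2))) = r^2 / M^2 * V_dt M a h r) at_top"
      using ev by eventually_elim (simp add: V_dt_def dt_apply_def kerr_Delta_def)
    have "((\<lambda>r. r^2/M^2 * (1 - (2 + 4*M/r + 6*M^2*(r-rp)/r^3 - 2*M*c/(r^2+c^2)) * (r^2-2*M*r+a^2)/(2*(a^2+r^2)))) \<longlongrightarrow> C) at_top"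
      using M rppos apply real_asymp
      using M unfolding c_def by (simp add: field_simps power2_eq_square)
    then show ?thesis using e2 unfolding hp_def by (rule Lim_transform_eventually)
  qed
  have LY: "((\<lambda>r. Y_dt h r) \<longlongrightarrow> 2) at_top"
  proof -
    have e2: "eventually (\<lambda>r. hp r = Y_dt h r) at_top"
      using ev by eventually_elim (simp add: Y_dt_def dt_apply_def)
    have "((\<lambda>r. 2 + 4*M/r + 6*M^2*(r-rp)/r^3 - 2*M*c/(r^2+c^2)) \<longlongrightarrow> 2) at_top"
      by real_asymp
    then show ?thesis using e2 unfolding hp_def by (rule Lim_transform_eventually)
  qed
  have Lh: "((\<lambda>r. h r / r) \<longlongrightarrow> 2) at_top"
  proof -
    have l1: "((\<lambda>r. (2 * (r - rp) + 4 * M * ln (r / rp) + 3 * M^2 * (rp - r)^2 / (rp * r^2)) / r) \<longlongrightarrow> 2) at_top"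
      using rppos M by real_asymp
    have l2a: "((\<lambda>r. 2 * M * arctan (c / r) - 2 * M * arctan (c / rp)) \<longlongrightarrow> 2 * M * arctan 0 - 2 * M * arctan (c / rp)) at_top"
      by (intro tendsto_intros) real_asymp
    have l2b: "((\<lambda>r::real. 1 / r) \<longlongrightarrow> 0) at_top" by real_asymp
    have l2: "((\<lambda>r. (2 * M * arctan (c / r) - 2 * M * arctan (c / rp)) * (1/r)) \<longlongrightarrow> (2 * M * arctan 0 - 2 * M * arctan (c / rp)) * 0) at_top"
      by (rule tendsto_mult[OF l2a l2b])
    have "((\<lambda>r. (2 * (r - rp) + 4 * M * ln (r / rp) + 3 * M^2 * (rp - r)^2 / (rp * r^2)) / r
        + (2 * M * arctan (c / r) - 2 * M * arctan (c / rp)) * (1/r)) \<longlongrightarrow> 2 + (2 * M * arctan 0 - 2 * M * arctan (c / rp)) * 0) at_top"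
      by (rule tendsto_add[OF l1 l2])
    then have "((\<lambda>r. (2 * (r - rp) + 4 * M * ln (r / rp) + 3 * M^2 * (rp - r)^2 / (rp * r^2)) / r
        + (2 * M * arctan (c / r) - 2 * M * arctan (c / rp)) * (1/r)) \<longlongrightarrow> 2) at_top" by simp
    moreover have "\<And>r. (2 * (r - rp) + 4 * M * ln (r / rp) + 3 * M^2 * (rp - r)^2 / (rp * r^2)) / r
        + (2 * M * arctan (c / r) - 2 * M * arctan (c / rp)) * (1/r) = h r / r"
      unfolding hdef by (simp add: add_divide_distrib diff_divide_distrib)
    ultimately show ?thesis by simp
  qed
  have H0: "h rp = 0" unfolding hdef using rppos by simp
  have Hd: "\<forall>r \<ge> rp. deriv h r \<ge> 0"
  proof (intro allI impI)
    fix r assume r: "r \<ge> rp"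
    then have "r > 0" using rppos by linarith
    then show "deriv h r \<ge> 0" using dh hp_pos[OF M rppos r c0] unfolding hp_def by simp
  qed
  have D: "\<exists>L>0. ((\<lambda>r. r^2 / M^2 * V_dt M a h r) \<longlongrightarrow> L) at_top"
    using LV assms(3) by (intro exI[of _ C]) simp
  have "regular_future_hyperboloidal M a h"
    unfolding regular_future_hyperboloidal_def Let_def rp_def[symmetric]
    using A B Cc D LY by blast
  then show ?thesis using H0 Hd Lh LV unfolding rp_def by blast
qed

end
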